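(* Let $(X,\rho_X)$ be a symmetric rack, $\mathcal F=(A,\phi,\psi,\eta)$ a constant-coefficient $(X,\rho_X)$-module, $\alpha\in Z^2_{SR}((X,\rho_X);A)$, and $E(\mathcal F,\alpha)$ the abelian extension of $(X,\rho_X)$ by $\mathcal F$ through $\alpha$. Then there is an exact sequence of groups $$0\to Z^1_{SR}((X,\rho_X);A)\xrightarrow{\ \iota\ }\operatorname{Aut}_A\big(E(\mathcal F,\alpha),\rho_{E(\mathcal F,\alpha)}\big)\xrightarrow{\ \Gamma\ }\operatorname{Aut}(X,\rho_X)\times\operatorname{Aut}(A)\xrightarrow{\ \Lambda_{[\alpha]}\ }H^2_{SR}((X,\rho_X);A),$$ where $\iota(\lambda)$ is the map $(x,s)\mapsto(x,\lambda(x)+s)$. That is: $\iota$ is an injective group homomorphism with image $\operatorname{Ker}(\Gamma)$, $\Gamma$ is a group homomorphism, and (with $\Lambda_{[\alpha]}$ merely a set map) $\operatorname{Im}(\Gamma)=\Lambda_{[\alpha]}^{-1}(0)$, where $0$ is the identity of $H^2_{SR}((X,\rho_X);A)$.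
   Context: A rack is a set $X$ with binary operation $*$ such that each $x\mapsto x*y$ is bijective (inverse $x\mapsto x*^{-1}y$) and $(x*y)*z=(x*z)*(y*z)$. A symmetric rack $(X,\rho_X)$ is a rack with $\rho_X:X\to X$ such that $\rho_X^2=\mathrm{id}$, $\rho_X(x*y)=\rho_X(x)*y$, $x*\rho_X(y)=x*^{-1}y$. $\operatorname{Aut}(X,\rho_X)$: bijections preserving $*$ and commuting with $\rho_X$. A constant-coefficient $(X,\rho_X)$-module $\mathcal F=(A,\phi,\psi,\eta)$: an abelian group $A$ with group automorphism $\phi$ and endomorphisms $\psi,\eta$ satisfying $\phi\psi=\psi\phi$, $\eta^2=\mathrm{id}$, $\eta\phi=\phi\eta$, $\eta\psi=\psi$, $\phi^2=\mathrm{id}$, $\psi=\phi\psi+\psi^2$, $\phi\psi\eta=-\psi$ (the module axioms with $A_x=A$, $\phi_{x,y}=\phi$, $\psi_{x,y}=\psi$, $\eta_x=\eta$). $\operatorname{Aut}(A)$: group automorphisms of $A$ commuting with $\phi,\psi,\eta$. Cohomology (all groups under pointwise addition): $Z^1_{SR}((X,\rho_X);A)=\{\lambda:X\to A\mid \phi\lambda(x)-\lambda(x*y)+\psi\lambda(y)=0,\ \eta\lambda(z)=\lambda(\rho_X(z))\ \forall x,y,z\}$. $Z^2_{SR}((X,\rho_X);A)$: maps $\sigma:X\times X\to A$ with, for all $x,y,z$: $-\phi\sigma(x,z)+\phi\sigma(x,y)+\sigma(x*y,z)-\sigma(x*z,y*z)-\psi\sigma(y,z)=0$, $\eta\sigma(x,y)=\sigma(\rho_X(x),y)$,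 $\phi\sigma(x*y,\rho_X(y))+\sigma(x,y)=0$. $B^2_{SR}$: maps $(x,y)\mapsto\phi\lambda(x)-\lambda(x*y)+\psi\lambda(y)$ with $\lambda:X\to A$ satisfying $\eta\lambda(x)=\lambda(\rho_X(x))$. $H^2_{SR}=Z^2_{SR}/B^2_{SR}$. Action: for $(\zeta,\theta)\in\operatorname{Aut}(X,\rho_X)\times\operatorname{Aut}(A)$, ${}^{(\zeta,\theta)}\sigma(x,y)=\theta(\sigma(\zeta^{-1}(x),\zeta^{-1}(y)))$ and ${}^{(\zeta,\theta)}[\sigma]=[{}^{(\zeta,\theta)}\sigma]$. $\Lambda_{[\alpha]}(\zeta,\theta)=[\alpha]-{}^{(\zeta,\theta)}[\alpha]$. $E(\mathcal F,\alpha)$ is the symmetric rack on $X\times A$ with $(x,a)*(y,b)=(x*y,\phi(a)+\psi(b)+\alpha(x,y))$ and $\rho_{E(\mathcal F,\alpha)}(x,a)=(\rho_X(x),\eta(a))$. $\operatorname{Aut}_A(E(\mathcal F,\alpha),\rho_{E(\mathcal F,\alpha)})$ is the group of symmetric rack automorphisms $\xi$ of $E(\mathcal F,\alpha)$ of the form $\xi(x,s)=(\zeta(x),\lambda(x)+\theta(s))$ for some $(\zeta,\theta)\in\operatorname{Aut}(X,\rho_X)\times\operatorname{Aut}(A)$ and some map $\lambda:X\to A$; $\Gamma(\xi)=(\zeta,\theta)$. *)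

theory Defs
  imports Main "HOL-Algebra.Coset"
begin

definition rack :: "('x \<Rightarrow> 'x \<Rightarrow> 'x) \<Rightarrow> bool" where
  "rack op \<longleftrightarrow> (\<forall>y. bij (\<lambda>x. op x y)) \<and>
     (\<forall>x y z. op (op x y) z = op (op x z) (op y z))"

definition rack_inv_op :: "('x \<Rightarrow> 'x \<Rightarrow> 'x) \<Rightarrow> 'x \<Rightarrow> 'x \<Rightarrow> 'x" where
  "rack_inv_op op x y = inv_into UNIV (\<lambda>u. op u y) x"

definition symmetric_rack :: "('x \<Rightarrow> 'x \<Rightarrow> 'x) \<Rightarrow> ('x \<Rightarrow> 'x) \<Rightarrow> bool" where
  "symmetric_rack op rho \<longleftrightarrow> rack op \<and> (\<forall>x. rho (rho x) = x) \<and>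
     (\<forall>x y. rho (op x y) = op (rho x) y) \<and>
     (\<forall>x y. op x (rho y) = rack_inv_op op x y)"

definition Aut_SR :: "('x \<Rightarrow> 'x \<Rightarrow> 'x) \<Rightarrow> ('x \<Rightarrow> 'x) \<Rightarrow> ('x \<Rightarrow> 'x) set" where
  "Aut_SR op rho = {z. bij z \<and> (\<forall>x y. z (op x y) = op (z x) (z y)) \<and> (\<forall>x. z (rho x) = rho (z x))}"

definition grp_hom_endo :: "('a::ab_group_add \<Rightarrow> 'a) \<Rightarrow> bool" where
  "grp_hom_endo f \<longleftrightarrow> (\<forall>a b. f (a + b) = f a + f b)"

definition cc_module :: "('a::ab_group_add \<Rightarrow> 'a) \<Rightarrow> ('a \<Rightarrow> 'a) \<Rightarrow> ('a \<Rightarrow> 'a) \<Rightarrow> bool" where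
  "cc_module phi psi eta \<longleftrightarrow>
     bij phi \<and> grp_hom_endo phi \<and> grp_hom_endo psi \<and> grp_hom_endo eta \<and>
     (\<forall>a. phi (psi a) = psi (phi a)) \<and>
     (\<forall>a. eta (eta a) = a) \<and>
     (\<forall>a. eta (phi a) = phi (eta a)) \<and>
     (\<forall>a. eta (psi a) = psi a) \<and>
     (\<forall>a. phi (phi a) = a) \<and>
     (\<forall>a. psi a = phi (psi a) + psi (psi a)) \<and>
     (\<forall>a. phi (psi (eta a)) = - psi a)"

definition Aut_Mod :: "('a::ab_group_add \<Rightarrow> 'a) \<Rightarrow> ('a \<Rightarrow> 'a) \<Rightarrow> ('a \<Rightarrow> 'a) \<Rightarrow> ('a \<Rightarrow> 'a) set" where
  "Aut_Mod phi psi eta = {t. bij t \<and> grp_hom_endo t \<and>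
     (\<forall>a. t (phi a) = phi (t a)) \<and> (\<forall>a. t (psi a) = psi (t a)) \<and> (\<forall>a. t (eta a) = eta (t a))}"

definition Z1_SR :: "('x \<Rightarrow> 'x \<Rightarrow> 'x) \<Rightarrow> ('x \<Rightarrow> 'x) \<Rightarrow> ('a::ab_group_add \<Rightarrow> 'a) \<Rightarrow> ('a \<Rightarrow> 'a) \<Rightarrow> ('a \<Rightarrow> 'a)
    \<Rightarrow> ('x \<Rightarrow> 'a) set" where
  "Z1_SR op rho phi psi eta = {l. (\<forall>x y. phi (l x) - l (op x y) + psi (l y) = 0) \<and>
     (\<forall>z. eta (l z) = l (rho z))}"

definition Z2_SR :: "('x \<Rightarrow> 'x \<Rightarrow> 'x) \<Rightarrow> ('x \<Rightarrow> 'x) \<Rightarrow> ('a::ab_group_add \<Rightarrow> 'a) \<Rightarrow> ('a \<Rightarrow> 'a) \<Rightarrow> ('a \<Rightarrow> 'a)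
    \<Rightarrow> ('x \<Rightarrow> 'x \<Rightarrow> 'a) set" where
  "Z2_SR op rho phi psi eta = {s.
     (\<forall>x y z. - phi (s x z) + phi (s x y) + s (op x y) z - s (op x z) (op y z) - psi (s y z) = 0) \<and>
     (\<forall>x y. eta (s x y) = s (rho x) y) \<and>
     (\<forall>x y. phi (s (op x y) (rho y)) + s x y = 0)}"

definition B2_SR :: "('x \<Rightarrow> 'x \<Rightarrow> 'x) \<Rightarrow> ('x \<Rightarrow> 'x) \<Rightarrow> ('a::ab_group_add \<Rightarrow> 'a) \<Rightarrow> ('a \<Rightarrow> 'a) \<Rightarrow> ('a \<Rightarrow> 'a)
    \<Rightarrow> ('x \<Rightarrow> 'x \<Rightarrow> 'a) set" where
  "B2_SR op rho phi psi eta = {s. \<exists>l. (\<forall>x. eta (l x) = l (rho x)) \<and>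
     s = (\<lambda>x y. phi (l x) - l (op x y) + psi (l y))}"

text \<open>Cohomology class in H^2_SR = Z^2_SR / B^2_SR, represented as the coset sigma + B^2_SR.\<close>
definition H2_class :: "('x \<Rightarrow> 'x \<Rightarrow> 'x) \<Rightarrow> ('x \<Rightarrow> 'x) \<Rightarrow> ('a::ab_group_add \<Rightarrow> 'a) \<Rightarrow> ('a \<Rightarrow> 'a) \<Rightarrow> ('a \<Rightarrow> 'a)
    \<Rightarrow> ('x \<Rightarrow> 'x \<Rightarrow> 'a) \<Rightarrow> ('x \<Rightarrow> 'x \<Rightarrow> 'a) set" where
  "H2_class op rho phi psi eta s = {t. (\<lambda>x y. t x y - s x y) \<in> B2_SR op rho phi psi eta}"

definition act2 :: "('x \<Rightarrow> 'x) \<times> ('a \<Rightarrow> 'a) \<Rightarrow> ('x \<Rightarrow> 'x \<Rightarrow> 'a) \<Rightarrow> ('x \<Rightarrow> 'x \<Rightarrow> 'a)" where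
  "act2 p s = (\<lambda>x y. snd p (s (inv_into UNIV (fst p) x) (inv_into UNIV (fst p) y)))"

text \<open>Lambda_[alpha](zeta,theta) = [alpha] - (zeta,theta)[alpha] = [alpha - (zeta,theta)alpha].\<close>
definition Lambda_SR :: "('x \<Rightarrow> 'x \<Rightarrow> 'x) \<Rightarrow> ('x \<Rightarrow> 'x) \<Rightarrow> ('a::ab_group_add \<Rightarrow> 'a) \<Rightarrow> ('a \<Rightarrow> 'a) \<Rightarrow> ('a \<Rightarrow> 'a)
    \<Rightarrow> ('x \<Rightarrow> 'x \<Rightarrow> 'a) \<Rightarrow> ('x \<Rightarrow> 'x) \<times> ('a \<Rightarrow> 'a) \<Rightarrow> ('x \<Rightarrow> 'x \<Rightarrow> 'a) set" where
  "Lambda_SR op rho phi psi eta alpha p =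
     H2_class op rho phi psi eta (\<lambda>x y. alpha x y - act2 p alpha x y)"

definition H2_zero :: "('x \<Rightarrow> 'x \<Rightarrow> 'x) \<Rightarrow> ('x \<Rightarrow> 'x) \<Rightarrow> ('a::ab_group_add \<Rightarrow> 'a) \<Rightarrow> ('a \<Rightarrow> 'a) \<Rightarrow> ('a \<Rightarrow> 'a)
    \<Rightarrow> ('x \<Rightarrow> 'x \<Rightarrow> 'a) set" where
  "H2_zero op rho phi psi eta = H2_class op rho phi psi eta (\<lambda>x y. 0)"

definition ext_op :: "('x \<Rightarrow> 'x \<Rightarrow> 'x) \<Rightarrow> ('a::ab_group_add \<Rightarrow> 'a) \<Rightarrow> ('a \<Rightarrow> 'a) \<Rightarrow> ('x \<Rightarrow> 'x \<Rightarrow> 'a)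
    \<Rightarrow> 'x \<times> 'a \<Rightarrow> 'x \<times> 'a \<Rightarrow> 'x \<times> 'a" where
  "ext_op op phi psi alpha = (\<lambda>(x, a) (y, b). (op x y, phi a + psi b + alpha x y))"

definition ext_rho :: "('x \<Rightarrow> 'x) \<Rightarrow> ('a \<Rightarrow> 'a) \<Rightarrow> 'x \<times> 'a \<Rightarrow> 'x \<times> 'a" where
  "ext_rho rho eta = (\<lambda>(x, a). (rho x, eta a))"

definition Aut_A_ext :: "('x \<Rightarrow> 'x \<Rightarrow> 'x) \<Rightarrow> ('x \<Rightarrow> 'x) \<Rightarrow> ('a::ab_group_add \<Rightarrow> 'a) \<Rightarrow> ('a \<Rightarrow> 'a) \<Rightarrow> ('a \<Rightarrow> 'a)
    \<Rightarrow> ('x \<Rightarrow> 'x \<Rightarrow> 'a) \<Rightarrow> ('x \<times> 'a \<Rightarrow> 'x \<times> 'a) set" where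
  "Aut_A_ext op rho phi psi eta alpha =
     {xi \<in> Aut_SR (ext_op op phi psi alpha) (ext_rho rho eta).
        \<exists>z t l. z \<in> Aut_SR op rho \<and> t \<in> Aut_Mod phi psi eta \<and>
          (\<forall>x s. xi (x, s) = (z x, l x + t s))}"

text \<open>Gamma(xi) = (zeta, theta), read off from xi(x,s) = (zeta x, lambda x + theta s).\<close>
definition Gamma_SR :: "('x \<times> 'a::ab_group_add \<Rightarrow> 'x \<times> 'a) \<Rightarrow> ('x \<Rightarrow> 'x) \<times> ('a \<Rightarrow> 'a)" where
  "Gamma_SR xi = ((\<lambda>x. fst (xi (x, 0))),
                  (\<lambda>s. snd (xi (undefined, s)) - snd (xi (undefined, 0))))"

definition iota_SR :: "('x \<Rightarrow> 'a::ab_group_add) \<Rightarrow> ('x \<times> 'a \<Rightarrow> 'x \<times> 'a)" where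
  "iota_SR l = (\<lambda>(x, s). (x, l x + s))"

definition Z1_group :: "('x \<Rightarrow> 'x \<Rightarrow> 'x) \<Rightarrow> ('x \<Rightarrow> 'x) \<Rightarrow> ('a::ab_group_add \<Rightarrow> 'a) \<Rightarrow> ('a \<Rightarrow> 'a) \<Rightarrow> ('a \<Rightarrow> 'a)
    \<Rightarrow> ('x \<Rightarrow> 'a) monoid" where
  "Z1_group op rho phi psi eta =
     \<lparr>carrier = Z1_SR op rho phi psi eta, mult = (\<lambda>l1 l2 x. l1 x + l2 x), one = (\<lambda>x. 0)\<rparr>"

definition Aut_A_ext_group :: "('x \<Rightarrow> 'x \<Rightarrow> 'x) \<Rightarrow> ('x \<Rightarrow> 'x) \<Rightarrow> ('a::ab_group_add \<Rightarrow> 'a) \<Rightarrow> ('a \<Rightarrow> 'a) \<Rightarrow> ('a \<Rightarrow> 'a)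
    \<Rightarrow> ('x \<Rightarrow> 'x \<Rightarrow> 'a) \<Rightarrow> ('x \<times> 'a \<Rightarrow> 'x \<times> 'a) monoid" where
  "Aut_A_ext_group op rho phi psi eta alpha =
     \<lparr>carrier = Aut_A_ext op rho phi psi eta alpha, mult = (\<lambda>f g. f \<circ> g), one = id\<rparr>"

definition Aut_SR_group :: "('x \<Rightarrow> 'x \<Rightarrow> 'x) \<Rightarrow> ('x \<Rightarrow> 'x) \<Rightarrow> ('x \<Rightarrow> 'x) monoid" where
  "Aut_SR_group op rho = \<lparr>carrier = Aut_SR op rho, mult = (\<lambda>f g. f \<circ> g), one = id\<rparr>"

definition Aut_Mod_group :: "('a::ab_group_add \<Rightarrow> 'a) \<Rightarrow> ('a \<Rightarrow> 'a) \<Rightarrow> ('a \<Rightarrow> 'a) \<Rightarrow> ('a \<Rightarrow> 'a) monoid" where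
  "Aut_Mod_group phi psi eta = \<lparr>carrier = Aut_Mod phi psi eta, mult = (\<lambda>f g. f \<circ> g), one = id\<rparr>"

end

theory Submission
  imports Defs
begin


lemma hom_0: "grp_hom_endo f \<Longrightarrow> f 0 = 0"
proof -
  assume "grp_hom_endo f"
  then have "f (0 + 0) = f 0 + f 0" unfolding grp_hom_endo_def by blast
  then show ?thesis by simp
qed
lemma hom_add: "grp_hom_endo f \<Longrightarrow> f (a + b) = f a + f b"
  unfolding grp_hom_endo_def by blast
lemma hom_neg: "grp_hom_endo f \<Longrightarrow> f (- a) = - f a"
proof -
  assume h: "grp_hom_endo f"
  have "f (- a) + f a = 0" using hom_add[OF h, of "-a" a, symmetric] hom_0[OF h] by simp
  then show ?thesis by (simp add: eq_neg_iff_add_eq_0)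
qed
lemma hom_diff: "grp_hom_endo f \<Longrightarrow> f (a - b) = f a - f b"
proof -
  assume h: "grp_hom_endo f"
  show ?thesis using hom_add[OF h, of a "- b"] hom_neg[OF h, of b] by simp
qed

lemma perm_group:
  assumes "id \<in> S" "\<And>f. f \<in> S \<Longrightarrow> bij f" "\<And>f g. f \<in> S \<Longrightarrow> g \<in> S \<Longrightarrow> f \<circ> g \<in> S"
    "\<And>f. f \<in> S \<Longrightarrow> inv_into UNIV f \<in> S"
  shows "group \<lparr>carrier = S, mult = (\<lambda>f g. f \<circ> g), one = id\<rparr>"
proof (rule groupI, goal_cases)
  case (5 f)
  then have "f \<in> S" by simp
  then show ?case using assms(2,4)[of f] 
    by (intro bexI[of _ "inv_into UNIV f"]) (simp_all add: bij_is_inj inv_o_cancel)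
qed (use assms in \<open>auto simp: o_assoc\<close>)

lemma Aut_SR_comp: "f \<in> Aut_SR op rho \<Longrightarrow> g \<in> Aut_SR op rho \<Longrightarrow> f \<circ> g \<in> Aut_SR op rho"
  unfolding Aut_SR_def by (auto intro: bij_comp)

lemma Aut_SR_id: "id \<in> Aut_SR op rho"
  unfolding Aut_SR_def by auto

lemma Aut_SR_inv: assumes "f \<in> Aut_SR op rho" shows "inv_into UNIV f \<in> Aut_SR op rho"
proof -
  have b: "bij f" and h: "\<And>x y. f (op x y) = op (f x) (f y)" and r: "\<And>x. f (rho x) = rho (f x)"
    using assms unfolding Aut_SR_def by auto
  have fi: "\<And>x. f (inv_into UNIV f x) = x" using b by (simp add: bij_is_surj surj_f_inv_f)
  have i: "inj f" using b bij_is_inj by blast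
  have "inv_into UNIV f (op x y) = op (inv_into UNIV f x) (inv_into UNIV f y)" for x y
    using i by (rule injD) (simp add: h fi)
  moreover have "inv_into UNIV f (rho x) = rho (inv_into UNIV f x)" for x
    using i by (rule injD) (simp add: r fi)
  ultimately show ?thesis using b bij_imp_bij_inv unfolding Aut_SR_def by auto
qed

lemma Aut_SR_group: "group (Aut_SR_group op rho)"
  unfolding Aut_SR_group_def
  by (rule perm_group[OF Aut_SR_id _ Aut_SR_comp Aut_SR_inv]) (simp_all add: Aut_SR_def)

lemma Aut_Mod_comp: "f \<in> Aut_Mod phi psi eta \<Longrightarrow> g \<in> Aut_Mod phi psi eta \<Longrightarrow> f \<circ> g \<in> Aut_Mod phi psi eta"
  unfolding Aut_Mod_def grp_hom_endo_def by (auto intro: bij_comp)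

lemma Aut_Mod_inv: assumes "f \<in> Aut_Mod phi psi eta" shows "inv_into UNIV f \<in> Aut_Mod phi psi eta"
proof -
  have b: "bij f" and h: "grp_hom_endo f" and r: "\<And>x. f (phi x) = phi (f x)" "\<And>x. f (psi x) = psi (f x)"
     "\<And>x. f (eta x) = eta (f x)"
    using assms unfolding Aut_Mod_def by auto
  have fi: "\<And>x. f (inv_into UNIV f x) = x" using b by (simp add: bij_is_surj surj_f_inv_f)
  have i: "inj f" using b bij_is_inj by blast
  have "inv_into UNIV f (x + y) = inv_into UNIV f x + inv_into UNIV f y" for x y
    using i by (rule injD) (simp add: hom_add[OF h] fi)
  moreover have "inv_into UNIV f (phi x) = phi (inv_into UNIV f x)" for x
    using i by (rule injD) (simp add: r fi)
  moreover have "inv_into UNIV f (psi x) = psi (inv_into UNIV f x)" for x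
    using i by (rule injD) (simp add: r fi)
  moreover have "inv_into UNIV f (eta x) = eta (inv_into UNIV f x)" for x
    using i by (rule injD) (simp add: r fi)
  ultimately show ?thesis using b bij_imp_bij_inv unfolding Aut_Mod_def grp_hom_endo_def by auto
qed

lemma Aut_Mod_group: "group (Aut_Mod_group phi psi eta)"
  unfolding Aut_Mod_group_def
  by (rule perm_group[OF _ _ Aut_Mod_comp Aut_Mod_inv]) (simp_all add: Aut_Mod_def grp_hom_endo_def)

lemma Z1_group: assumes "cc_module phi psi eta" shows "group (Z1_group op rho phi psi eta)"
proof -
  have p: "grp_hom_endo phi" "grp_hom_endo psi" "grp_hom_endo eta" using assms cc_module_def by auto
  show ?thesis unfolding Z1_group_def
  proof (rule groupI, goal_cases)
    case (1 x y)
    have "phi (x a + y a) - (x (op a b) + y (op a b)) + psi (x b + y b) = 0" for a b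
    proof -
      have "phi (x a) - x (op a b) + psi (x b) = 0" "phi (y a) - y (op a b) + psi (y b) = 0"
        using 1 by (auto simp: Z1_SR_def)
      then show ?thesis by (simp add: hom_add[OF p(1)] hom_add[OF p(2)] algebra_simps)
    qed
    then show ?case using 1 by (auto simp: Z1_SR_def hom_add[OF p(3)])
  next
    case 2 then show ?case by (simp add: Z1_SR_def hom_0 p)
  next
    case 3 then show ?case by (simp add: add.assoc)
  next
    case 4 then show ?case by simp
  next
    case (5 x)
    have "phi (- x a) - (- x (op a b)) + psi (- x b) = 0" for a b
    proof -
      have "phi (x a) - x (op a b) + psi (x b) = 0"
        using 5 by (auto simp: Z1_SR_def)
      then show ?thesis by (simp add: hom_neg[OF p(1)] hom_neg[OF p(2)] algebra_simps)
    qed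
    moreover have "eta (- x z) = - x (rho z)" for z
      using 5 by (simp add: Z1_SR_def hom_neg[OF p(3)])
    ultimately have "(\<lambda>z. - x z) \<in> Z1_SR op rho phi psi eta"
      unfolding Z1_SR_def by blast
    then show ?case by (intro bexI[of _ "\<lambda>z. - x z"]) simp_all
  qed
qed



lemma cc_homs: assumes "cc_module phi psi eta"
  shows "grp_hom_endo phi" "grp_hom_endo psi" "grp_hom_endo eta"
  using assms unfolding cc_module_def by auto

lemma Aut_Mod_D: assumes "t \<in> Aut_Mod phi psi eta"
  shows "bij t" "grp_hom_endo t" "\<And>a. t (phi a) = phi (t a)" "\<And>a. t (psi a) = psi (t a)"
    "\<And>a. t (eta a) = eta (t a)"
  using assms unfolding Aut_Mod_def by auto

lemma Aut_SR_D: assumes "z \<in> Aut_SR op rho"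
  shows "bij z" "\<And>x y. z (op x y) = op (z x) (z y)" "\<And>x. z (rho x) = rho (z x)"
    "\<And>x. z (inv_into UNIV z x) = x" "\<And>x. inv_into UNIV z (z x) = x"
  using assms unfolding Aut_SR_def
  by (auto simp: bij_is_surj surj_f_inv_f bij_is_inj inv_into_f_f)

lemma dest_Aut:
  assumes cc: "cc_module phi psi eta" and xi: "xi \<in> Aut_A_ext op rho phi psi eta alpha"
  obtains z t l where "z \<in> Aut_SR op rho" "t \<in> Aut_Mod phi psi eta" "\<And>x s. xi (x, s) = (z x, l x + t s)"
    "\<And>x y. l (op x y) + t (alpha x y) = phi (l x) + psi (l y) + alpha (z x) (z y)"
    "\<And>x. l (rho x) = eta (l x)"
proof -
  obtain z t l where z: "z \<in> Aut_SR op rho" and t: "t \<in> Aut_Mod phi psi eta"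
    and d: "\<And>x s. xi (x, s) = (z x, l x + t s)"
    and xs: "xi \<in> Aut_SR (ext_op op phi psi alpha) (ext_rho rho eta)"
    using xi unfolding Aut_A_ext_def by blast
  note h = cc_homs[OF cc]
  have t0: "t 0 = 0" using Aut_Mod_D(2)[OF t] hom_0 by blast
  have K: "l (op x y) + t (alpha x y) = phi (l x) + psi (l y) + alpha (z x) (z y)" for x y
  proof -
    have "xi (ext_op op phi psi alpha (x, 0) (y, 0)) = ext_op op phi psi alpha (xi (x, 0)) (xi (y, 0))"
      using xs unfolding Aut_SR_def by blast
    then show ?thesis by (simp add: ext_op_def d t0 hom_0[OF h(1)] hom_0[OF h(2)])
  qed
  have R: "l (rho x) = eta (l x)" for x
  proof -
    have "xi (ext_rho rho eta (x, 0)) = ext_rho rho eta (xi (x, 0))"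
      using xs unfolding Aut_SR_def by blast
    then show ?thesis by (simp add: ext_rho_def d t0 hom_0[OF h(3)])
  qed
  show ?thesis using that z t d K R by blast
qed

lemma mk_Aut:
  assumes cc: "cc_module phi psi eta" and z: "z \<in> Aut_SR op rho" and t: "t \<in> Aut_Mod phi psi eta"
    and K: "\<And>x y. l (op x y) + t (alpha x y) = phi (l x) + psi (l y) + alpha (z x) (z y)"
    and R: "\<And>x. l (rho x) = eta (l x)"
  shows "(\<lambda>(x, s). (z x, l x + t s)) \<in> Aut_A_ext op rho phi psi eta alpha"
proof -
  define xi where "xi = (\<lambda>(x, s). (z x, l x + t s))"
  note h = cc_homs[OF cc]
  note tD = Aut_Mod_D[OF t]
  note zD = Aut_SR_D[OF z]
  have d: "xi (x, s) = (z x, l x + t s)" for x s by (simp add: xi_def)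
  have "bij xi"
  proof (rule bijI)
    show "inj xi"
    proof (rule injI)
      fix p q assume e: "xi p = xi q"
      obtain x s where p: "p = (x, s)" by force
      obtain y r where q: "q = (y, r)" by force
      have "z x = z y" "l x + t s = l y + t r" using e by (simp_all add: p q d)
      then have "x = y" using zD(5) by metis
      then have "t s = t r" using \<open>l x + t s = l y + t r\<close> by simp
      then have "s = r" using tD(1) bij_is_inj injD by metis
      then show "p = q" using p q \<open>x = y\<close> by simp
    qed
  next
    have "\<exists>q. (y, r) = xi q" for y r
    proof -
      let ?x = "inv_into UNIV z y"
      have "t (inv_into UNIV t (r - l ?x)) = r - l ?x"
        using tD(1) by (simp add: bij_is_surj surj_f_inv_f)
      then have "xi (?x, inv_into UNIV t (r - l ?x)) = (y, r)" by (simp add: d zD(4))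
      then show ?thesis by metis
    qed
    then show "surj xi" unfolding surj_def by auto
  qed
  moreover have "xi (ext_op op phi psi alpha p q) = ext_op op phi psi alpha (xi p) (xi q)" for p q
  proof -
    obtain x a where p: "p = (x, a)" by force
    obtain y b where q: "q = (y, b)" by force
    have "l (op x y) + t (phi a + psi b + alpha x y) = phi (l x + t a) + psi (l y + t b) + alpha (z x) (z y)"
    proof -
      have "l (op x y) + t (phi a + psi b + alpha x y) = (l (op x y) + t (alpha x y)) + phi (t a) + psi (t b)"
        by (simp add: hom_add[OF tD(2)] tD(3,4) algebra_simps)
      also have "\<dots> = phi (l x + t a) + psi (l y + t b) + alpha (z x) (z y)"
        by (simp add: K hom_add[OF h(1)] hom_add[OF h(2)] algebra_simps)
      finally show ?thesis .
    qed
    then show ?thesis by (simp add: p q ext_op_def d zD(2))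
  qed
  moreover have "xi (ext_rho rho eta p) = ext_rho rho eta (xi p)" for p
  proof -
    obtain x a where p: "p = (x, a)" by force
    show ?thesis by (simp add: p ext_rho_def d zD(3) R tD(5) hom_add[OF h(3)])
  qed
  ultimately have "xi \<in> Aut_SR (ext_op op phi psi alpha) (ext_rho rho eta)"
    unfolding Aut_SR_def by blast
  then show ?thesis unfolding Aut_A_ext_def xi_def[symmetric] using z t d by blast
qed

lemma Gamma_decomp:
  assumes t: "t \<in> Aut_Mod phi psi eta" and d: "\<And>x s. xi (x, s) = (z x, l x + t s)"
  shows "Gamma_SR xi = (z, t)"
proof -
  have t0: "t 0 = 0" using Aut_Mod_D(2)[OF t] hom_0 by blast
  show ?thesis unfolding Gamma_SR_def by (simp add: d t0 fun_eq_iff)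
qed



lemma id_Aut_Mod: "id \<in> Aut_Mod phi psi eta"
  unfolding Aut_Mod_def grp_hom_endo_def by auto

lemma comp_decomp:
  assumes f: "\<And>x s. f (x, s) = (z1 x, l1 x + t1 s)" and g: "\<And>x s. g (x, s) = (z2 x, l2 x + t2 s)"
    and t1: "grp_hom_endo t1"
  shows "(f \<circ> g) (x, s) = ((z1 \<circ> z2) x, (l1 (z2 x) + t1 (l2 x)) + (t1 \<circ> t2) s)"
  by (simp add: f g hom_add[OF t1] add.assoc)

lemma Aut_A_ext_comp:
  assumes "f \<in> Aut_A_ext op rho phi psi eta alpha" "g \<in> Aut_A_ext op rho phi psi eta alpha"
  shows "f \<circ> g \<in> Aut_A_ext op rho phi psi eta alpha"
proof -
  obtain z1 t1 l1 where z1: "z1 \<in> Aut_SR op rho" and t1: "t1 \<in> Aut_Mod phi psi eta"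
    and d1: "\<And>x s. f (x, s) = (z1 x, l1 x + t1 s)"
    and s1: "f \<in> Aut_SR (ext_op op phi psi alpha) (ext_rho rho eta)"
    using assms(1) unfolding Aut_A_ext_def by blast
  obtain z2 t2 l2 where z2: "z2 \<in> Aut_SR op rho" and t2: "t2 \<in> Aut_Mod phi psi eta"
    and d2: "\<And>x s. g (x, s) = (z2 x, l2 x + t2 s)"
    and s2: "g \<in> Aut_SR (ext_op op phi psi alpha) (ext_rho rho eta)"
    using assms(2) unfolding Aut_A_ext_def by blast
  show ?thesis unfolding Aut_A_ext_def mem_Collect_eq
    apply (intro conjI exI[of _ "z1 \<circ> z2"] exI[of _ "t1 \<circ> t2"] exI[of _ "\<lambda>x. l1 (z2 x) + t1 (l2 x)"])
    using Aut_SR_comp[OF s1 s2] Aut_SR_comp[OF z1 z2] Aut_Mod_comp[OF t1 t2]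
      comp_decomp[where f=f and g=g, OF d1 d2 Aut_Mod_D(2)[OF t1]] by simp_all
qed

lemma Aut_A_ext_inv:
  assumes "f \<in> Aut_A_ext op rho phi psi eta alpha"
  shows "inv_into UNIV f \<in> Aut_A_ext op rho phi psi eta alpha"
proof -
  obtain z t l where z: "z \<in> Aut_SR op rho" and t: "t \<in> Aut_Mod phi psi eta"
    and d: "\<And>x s. f (x, s) = (z x, l x + t s)"
    and s: "f \<in> Aut_SR (ext_op op phi psi alpha) (ext_rho rho eta)"
    using assms unfolding Aut_A_ext_def by blast
  let ?iz = "inv_into UNIV z" and ?it = "inv_into UNIV t"
  have bf: "bij f" using s unfolding Aut_SR_def by blast
  have tit: "t (?it a) = a" for a using Aut_Mod_D(1)[OF t] by (simp add: bij_is_surj surj_f_inv_f)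
  have "inv_into UNIV f (x, s) = (?iz x, - ?it (l (?iz x)) + ?it s)" for x s
  proof -
    have "f (?iz x, - ?it (l (?iz x)) + ?it s) = (x, s)"
      by (simp add: d Aut_SR_D(4)[OF z] hom_add[OF Aut_Mod_D(2)[OF t]] hom_neg[OF Aut_Mod_D(2)[OF t]] hom_diff[OF Aut_Mod_D(2)[OF t]] tit)
    then show ?thesis using bf by (metis bij_is_inj inv_into_f_f UNIV_I)
  qed
  then show ?thesis unfolding Aut_A_ext_def mem_Collect_eq
    apply (intro conjI exI[of _ "?iz"] exI[of _ "?it"] exI[of _ "\<lambda>x. - ?it (l (?iz x))"])
    using Aut_SR_inv[OF s] Aut_SR_inv[OF z] Aut_Mod_inv[OF t] by simp_all
qed

lemma Aut_A_ext_id: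
  assumes cc: "cc_module phi psi eta"
  shows "id \<in> Aut_A_ext op rho phi psi eta alpha"
proof -
  note h = cc_homs[OF cc]
  have "(\<lambda>(x, s). (id x, (\<lambda>x. 0) x + id s)) \<in> Aut_A_ext op rho phi psi eta alpha"
    by (rule mk_Aut[OF cc Aut_SR_id id_Aut_Mod]) (simp_all add: hom_0 h)
  then show ?thesis by simp
qed

lemma Aut_A_ext_group:
  assumes cc: "cc_module phi psi eta"
  shows "group (Aut_A_ext_group op rho phi psi eta alpha)"
  unfolding Aut_A_ext_group_def
  by (rule perm_group[OF Aut_A_ext_id[OF cc] _ Aut_A_ext_comp Aut_A_ext_inv])
     (simp_all add: Aut_A_ext_def Aut_SR_def)

lemma iota_mem:
  assumes cc: "cc_module phi psi eta" and l: "l \<in> Z1_SR op rho phi psi eta"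
  shows "iota_SR l \<in> Aut_A_ext op rho phi psi eta alpha"
proof -
  have K: "l (op x y) = phi (l x) + psi (l y)" for x y
  proof -
    have "phi (l x) - l (op x y) + psi (l y) = 0" using l unfolding Z1_SR_def by blast
    then show ?thesis by (simp add: algebra_simps)
  qed
  have R: "l (rho x) = eta (l x)" for x using l unfolding Z1_SR_def by auto
  have "(\<lambda>(x, s). (id x, l x + id s)) \<in> Aut_A_ext op rho phi psi eta alpha"
    by (rule mk_Aut[OF cc Aut_SR_id id_Aut_Mod]) (simp_all add: K R)
  moreover have "(\<lambda>(x, s). (id x, l x + id s)) = iota_SR l" by (auto simp: iota_SR_def)
  ultimately show ?thesis by simp
qed



lemma B2_zero: assumes cc: "cc_module phi psi eta" shows "(\<lambda>x y. 0) \<in> B2_SR op rho phi psi eta"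
proof -
  note h = cc_homs[OF cc]
  show ?thesis unfolding B2_SR_def
    by (rule CollectI, rule exI[of _ "\<lambda>x. 0"]) (simp add: hom_0 h)
qed

lemma B2_add: assumes cc: "cc_module phi psi eta"
  and "s1 \<in> B2_SR op rho phi psi eta" "s2 \<in> B2_SR op rho phi psi eta"
  shows "(\<lambda>x y. s1 x y + s2 x y) \<in> B2_SR op rho phi psi eta"
proof -
  note h = cc_homs[OF cc]
  obtain l1 where l1: "\<And>x. eta (l1 x) = l1 (rho x)" "s1 = (\<lambda>x y. phi (l1 x) - l1 (op x y) + psi (l1 y))"
    using assms(2) unfolding B2_SR_def by blast
  obtain l2 where l2: "\<And>x. eta (l2 x) = l2 (rho x)" "s2 = (\<lambda>x y. phi (l2 x) - l2 (op x y) + psi (l2 y))"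
    using assms(3) unfolding B2_SR_def by blast
  show ?thesis unfolding B2_SR_def
    by (rule CollectI, rule exI[of _ "\<lambda>x. l1 x + l2 x"])
       (simp add: hom_add[OF h(1)] hom_add[OF h(2)] hom_add[OF h(3)] l1 l2 fun_eq_iff algebra_simps)
qed

lemma B2_neg: assumes cc: "cc_module phi psi eta"
  and "s1 \<in> B2_SR op rho phi psi eta"
  shows "(\<lambda>x y. - s1 x y) \<in> B2_SR op rho phi psi eta"
proof -
  note h = cc_homs[OF cc]
  obtain l1 where l1: "\<And>x. eta (l1 x) = l1 (rho x)" "s1 = (\<lambda>x y. phi (l1 x) - l1 (op x y) + psi (l1 y))"
    using assms(2) unfolding B2_SR_def by blast
  show ?thesis unfolding B2_SR_def
    by (rule CollectI, rule exI[of _ "\<lambda>x. - l1 x"])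
       (simp add: hom_neg[OF h(1)] hom_neg[OF h(2)] hom_neg[OF h(3)] l1 fun_eq_iff algebra_simps)
qed

lemma H2_eq: assumes cc: "cc_module phi psi eta"
  shows "H2_class op rho phi psi eta c = H2_zero op rho phi psi eta \<longleftrightarrow> c \<in> B2_SR op rho phi psi eta"
proof
  assume eq: "H2_class op rho phi psi eta c = H2_zero op rho phi psi eta"
  have "(\<lambda>x y. 0) \<in> H2_zero op rho phi psi eta"
    unfolding H2_zero_def H2_class_def using B2_zero[OF cc] by simp
  then have "(\<lambda>x y. 0) \<in> H2_class op rho phi psi eta c" using eq by simp
  then have "(\<lambda>x y. 0 - c x y) \<in> B2_SR op rho phi psi eta"
    unfolding H2_class_def by simp
  from B2_neg[OF cc this] show "c \<in> B2_SR op rho phi psi eta" by simp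
next
  assume c: "c \<in> B2_SR op rho phi psi eta"
  show "H2_class op rho phi psi eta c = H2_zero op rho phi psi eta"
  proof -
    have all: "(\<lambda>x y. t x y - c x y) \<in> B2_SR op rho phi psi eta \<longleftrightarrow> t \<in> B2_SR op rho phi psi eta" for t
    proof
      assume "(\<lambda>x y. t x y - c x y) \<in> B2_SR op rho phi psi eta"
      from B2_add[OF cc this c] show "t \<in> B2_SR op rho phi psi eta" by simp
    next
      assume "t \<in> B2_SR op rho phi psi eta"
      from B2_add[OF cc this B2_neg[OF cc c]] show "(\<lambda>x y. t x y - c x y) \<in> B2_SR op rho phi psi eta"
        by simp
    qed
    show ?thesis unfolding H2_zero_def H2_class_def by (simp add: all)
  qed
qed



lemma image_eq:
  assumes cc: "cc_module phi psi eta"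
  shows "Gamma_SR ` Aut_A_ext op rho phi psi eta alpha =
           {p \<in> Aut_SR op rho \<times> Aut_Mod phi psi eta.
              Lambda_SR op rho phi psi eta alpha p = H2_zero op rho phi psi eta}"
proof (intro equalityI subsetI)
  note h = cc_homs[OF cc]
  fix p assume "p \<in> Gamma_SR ` Aut_A_ext op rho phi psi eta alpha"
  then obtain xi where xi: "xi \<in> Aut_A_ext op rho phi psi eta alpha" and p: "p = Gamma_SR xi" by blast
  obtain z t l where z: "z \<in> Aut_SR op rho" and t: "t \<in> Aut_Mod phi psi eta"
    and d: "\<And>x s. xi (x, s) = (z x, l x + t s)"
    and K: "\<And>x y. l (op x y) + t (alpha x y) = phi (l x) + psi (l y) + alpha (z x) (z y)"
    and R: "\<And>x. l (rho x) = eta (l x)"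
    using dest_Aut[OF cc xi] by blast
  have pz: "p = (z, t)" using p Gamma_decomp[OF t d] by simp
  let ?iz = "inv_into UNIV z"
  note izD = Aut_SR_D[OF Aut_SR_inv[OF z]]
  note zD = Aut_SR_D[OF z]
  have "(\<lambda>x y. alpha x y - act2 (z, t) alpha x y) \<in> B2_SR op rho phi psi eta"
    unfolding B2_SR_def
  proof (rule CollectI, rule exI[of _ "\<lambda>x. - l (?iz x)"], rule conjI)
    show "\<forall>x. eta (- l (?iz x)) = - l (?iz (rho x))"
      by (simp add: hom_neg[OF h(3)] izD(3) R)
    show "(\<lambda>x y. alpha x y - act2 (z, t) alpha x y) =
      (\<lambda>x y. phi (- l (?iz x)) - - l (?iz (op x y)) + psi (- l (?iz y)))"
    proof (rule ext, rule ext)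
      fix x y
      have "l (op (?iz x) (?iz y)) + t (alpha (?iz x) (?iz y)) = phi (l (?iz x)) + psi (l (?iz y)) + alpha x y"
        using K[of "?iz x" "?iz y"] by (simp add: zD(4))
      then have "l (?iz (op x y)) + t (alpha (?iz x) (?iz y)) = phi (l (?iz x)) + psi (l (?iz y)) + alpha x y"
        by (simp add: izD(2))
      then show "alpha x y - act2 (z, t) alpha x y = phi (- l (?iz x)) - - l (?iz (op x y)) + psi (- l (?iz y))"
        by (simp add: act2_def hom_neg[OF h(1)] hom_neg[OF h(2)] algebra_simps)
    qed
  qed
  then have "Lambda_SR op rho phi psi eta alpha (z, t) = H2_zero op rho phi psi eta"
    unfolding Lambda_SR_def using H2_eq[OF cc] by blast
  then show "p \<in> {p \<in> Aut_SR op rho \<times> Aut_Mod phi psi eta.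
              Lambda_SR op rho phi psi eta alpha p = H2_zero op rho phi psi eta}"
    using z t pz by simp
next
  note h = cc_homs[OF cc]
  fix p assume "p \<in> {p \<in> Aut_SR op rho \<times> Aut_Mod phi psi eta.
              Lambda_SR op rho phi psi eta alpha p = H2_zero op rho phi psi eta}"
  then obtain z t where pz: "p = (z, t)" and z: "z \<in> Aut_SR op rho" and t: "t \<in> Aut_Mod phi psi eta"
    and L: "Lambda_SR op rho phi psi eta alpha (z, t) = H2_zero op rho phi psi eta" by auto
  have "(\<lambda>x y. alpha x y - act2 (z, t) alpha x y) \<in> B2_SR op rho phi psi eta"
    using L unfolding Lambda_SR_def using H2_eq[OF cc] by blast
  then obtain lB where E: "\<And>x. eta (lB x) = lB (rho x)"
    and c: "(\<lambda>x y. alpha x y - act2 (z, t) alpha x y) = (\<lambda>x y. phi (lB x) - lB (op x y) + psi (lB y))"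
    unfolding B2_SR_def by blast
  let ?iz = "inv_into UNIV z"
  note zD = Aut_SR_D[OF z]
  define l where "l = (\<lambda>x. - lB (z x))"
  have K: "l (op x y) + t (alpha x y) = phi (l x) + psi (l y) + alpha (z x) (z y)" for x y
  proof -
    have "alpha (z x) (z y) - t (alpha (?iz (z x)) (?iz (z y))) = phi (lB (z x)) - lB (op (z x) (z y)) + psi (lB (z y))"
      using fun_cong[OF fun_cong[OF c, of "z x"], of "z y"] by (simp add: act2_def)
    then have "alpha (z x) (z y) - t (alpha x y) = phi (lB (z x)) - lB (z (op x y)) + psi (lB (z y))"
      by (simp add: zD(5) zD(2))
    then show ?thesis
      by (simp add: l_def hom_neg[OF h(1)] hom_neg[OF h(2)] algebra_simps)
  qed
  have R: "l (rho x) = eta (l x)" for x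
    by (simp add: l_def zD(3) E hom_neg[OF h(3)])
  have m: "(\<lambda>(x, s). (z x, l x + t s)) \<in> Aut_A_ext op rho phi psi eta alpha"
    by (rule mk_Aut[OF cc z t K R])
  have "Gamma_SR (\<lambda>(x, s). (z x, l x + t s)) = (z, t)"
    by (rule Gamma_decomp[OF t]) simp
  then show "p \<in> Gamma_SR ` Aut_A_ext op rho phi psi eta alpha"
    using m pz by force
qed



theorem theorem6p7:
  fixes op :: "'x \<Rightarrow> 'x \<Rightarrow> 'x" and rho :: "'x \<Rightarrow> 'x"
    and phi psi eta :: "'a::ab_group_add \<Rightarrow> 'a"
    and alpha :: "'x \<Rightarrow> 'x \<Rightarrow> 'a"
  assumes "symmetric_rack op rho"
    and "cc_module phi psi eta"
    and "alpha \<in> Z2_SR op rho phi psi eta"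
  shows "group (Z1_group op rho phi psi eta) \<and>
    group (Aut_A_ext_group op rho phi psi eta alpha) \<and>
    group (Aut_SR_group op rho \<times>\<times> Aut_Mod_group phi psi eta) \<and>
    iota_SR \<in> hom (Z1_group op rho phi psi eta) (Aut_A_ext_group op rho phi psi eta alpha) \<and>
    inj_on iota_SR (Z1_SR op rho phi psi eta) \<and>
    iota_SR ` Z1_SR op rho phi psi eta =
           kernel (Aut_A_ext_group op rho phi psi eta alpha)
                  (Aut_SR_group op rho \<times>\<times> Aut_Mod_group phi psi eta) Gamma_SR \<and>
    Gamma_SR \<in> hom (Aut_A_ext_group op rho phi psi eta alpha)
                        (Aut_SR_group op rho \<times>\<times> Aut_Mod_group phi psi eta) \<and>
    Gamma_SR ` Aut_A_ext op rho phi psi eta alpha =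
           {p \<in> Aut_SR op rho \<times> Aut_Mod phi psi eta.
              Lambda_SR op rho phi psi eta alpha p = H2_zero op rho phi psi eta}"
proof -
  note cc = assms(2)
  have g3: "group (Aut_SR_group op rho \<times>\<times> Aut_Mod_group phi psi eta)"
    by (rule DirProd_group[OF Aut_SR_group Aut_Mod_group])
  have iota_mult: "iota_SR (\<lambda>x. l1 x + l2 x) = iota_SR l1 \<circ> iota_SR l2" for l1 l2 :: "'x \<Rightarrow> 'a"
    by (auto simp: iota_SR_def fun_eq_iff add.assoc)
  have hom1: "iota_SR \<in> hom (Z1_group op rho phi psi eta) (Aut_A_ext_group op rho phi psi eta alpha)"
  proof (rule homI)
    fix l assume "l \<in> carrier (Z1_group op rho phi psi eta)"
    then show "iota_SR l \<in> carrier (Aut_A_ext_group op rho phi psi eta alpha)"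
      using iota_mem[OF cc] by (simp add: Z1_group_def Aut_A_ext_group_def)
  next
    fix l1 l2
    show "iota_SR (l1 \<otimes>\<^bsub>Z1_group op rho phi psi eta\<^esub> l2) =
      iota_SR l1 \<otimes>\<^bsub>Aut_A_ext_group op rho phi psi eta alpha\<^esub> iota_SR l2"
      using iota_mult[of l1 l2] by (simp add: Z1_group_def Aut_A_ext_group_def)
  qed
  have inj: "inj_on iota_SR (Z1_SR op rho phi psi eta)"
  proof (rule inj_onI)
    fix l1 l2 :: "'x \<Rightarrow> 'a" assume "iota_SR l1 = iota_SR l2"
    then have "iota_SR l1 (x, 0) = iota_SR l2 (x, 0)" for x by simp
    then show "l1 = l2" by (simp add: iota_SR_def fun_eq_iff)
  qed
  have one: "\<one>\<^bsub>Aut_SR_group op rho \<times>\<times> Aut_Mod_group phi psi eta\<^esub> = (id, id)"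
    by (simp add: DirProd_def Aut_SR_group_def Aut_Mod_group_def)
  have ker: "iota_SR ` Z1_SR op rho phi psi eta =
           kernel (Aut_A_ext_group op rho phi psi eta alpha)
                  (Aut_SR_group op rho \<times>\<times> Aut_Mod_group phi psi eta) Gamma_SR"
  proof (intro equalityI subsetI)
    fix xi assume "xi \<in> iota_SR ` Z1_SR op rho phi psi eta"
    then obtain l where l: "l \<in> Z1_SR op rho phi psi eta" and xi: "xi = iota_SR l" by blast
    have "Gamma_SR xi = (id, id)"
      by (rule Gamma_decomp[OF id_Aut_Mod]) (simp add: xi iota_SR_def)
    then show "xi \<in> kernel (Aut_A_ext_group op rho phi psi eta alpha)
                  (Aut_SR_group op rho \<times>\<times> Aut_Mod_group phi psi eta) Gamma_SR"
      unfolding kernel_def one using iota_mem[OF cc l] xi by (simp add: Aut_A_ext_group_def)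
  next
    fix xi assume "xi \<in> kernel (Aut_A_ext_group op rho phi psi eta alpha)
                  (Aut_SR_group op rho \<times>\<times> Aut_Mod_group phi psi eta) Gamma_SR"
    then have xi: "xi \<in> Aut_A_ext op rho phi psi eta alpha" and g: "Gamma_SR xi = (id, id)"
      unfolding kernel_def one by (simp_all add: Aut_A_ext_group_def)
    obtain z t l where z: "z \<in> Aut_SR op rho" and t: "t \<in> Aut_Mod phi psi eta"
      and d: "\<And>x s. xi (x, s) = (z x, l x + t s)"
      and K: "\<And>x y. l (op x y) + t (alpha x y) = phi (l x) + psi (l y) + alpha (z x) (z y)"
      and R: "\<And>x. l (rho x) = eta (l x)"
      using dest_Aut[OF cc xi] by blast
    have zt: "z = id" "t = id" using g Gamma_decomp[OF t d] by simp_all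
    have "l \<in> Z1_SR op rho phi psi eta"
      unfolding Z1_SR_def using K R by (simp add: zt)
    moreover have "xi = iota_SR l" by (auto simp: fun_eq_iff iota_SR_def d zt)
    ultimately show "xi \<in> iota_SR ` Z1_SR op rho phi psi eta" by blast
  qed
  have hom2: "Gamma_SR \<in> hom (Aut_A_ext_group op rho phi psi eta alpha)
                        (Aut_SR_group op rho \<times>\<times> Aut_Mod_group phi psi eta)"
  proof (rule homI)
    fix xi assume "xi \<in> carrier (Aut_A_ext_group op rho phi psi eta alpha)"
    then have xi: "xi \<in> Aut_A_ext op rho phi psi eta alpha" by (simp add: Aut_A_ext_group_def)
    obtain z t l where z: "z \<in> Aut_SR op rho" and t: "t \<in> Aut_Mod phi psi eta"
      and d: "\<And>x s. xi (x, s) = (z x, l x + t s)"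
      and "\<And>x y. l (op x y) + t (alpha x y) = phi (l x) + psi (l y) + alpha (z x) (z y)"
      and "\<And>x. l (rho x) = eta (l x)"
      using dest_Aut[OF cc xi] by blast
    show "Gamma_SR xi \<in> carrier (Aut_SR_group op rho \<times>\<times> Aut_Mod_group phi psi eta)"
      using Gamma_decomp[OF t d] z t by (simp add: DirProd_def Aut_SR_group_def Aut_Mod_group_def)
  next
    fix f g assume "f \<in> carrier (Aut_A_ext_group op rho phi psi eta alpha)"
      "g \<in> carrier (Aut_A_ext_group op rho phi psi eta alpha)"
    then have f: "f \<in> Aut_A_ext op rho phi psi eta alpha" and g: "g \<in> Aut_A_ext op rho phi psi eta alpha"
      by (simp_all add: Aut_A_ext_group_def)
    obtain z1 t1 l1 where z1: "z1 \<in> Aut_SR op rho" and t1: "t1 \<in> Aut_Mod phi psi eta"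
      and d1: "\<And>x s. f (x, s) = (z1 x, l1 x + t1 s)"
      and "\<And>x y. l1 (op x y) + t1 (alpha x y) = phi (l1 x) + psi (l1 y) + alpha (z1 x) (z1 y)"
      and "\<And>x. l1 (rho x) = eta (l1 x)"
      using dest_Aut[OF cc f] by blast
    obtain z2 t2 l2 where z2: "z2 \<in> Aut_SR op rho" and t2: "t2 \<in> Aut_Mod phi psi eta"
      and d2: "\<And>x s. g (x, s) = (z2 x, l2 x + t2 s)"
      and "\<And>x y. l2 (op x y) + t2 (alpha x y) = phi (l2 x) + psi (l2 y) + alpha (z2 x) (z2 y)"
      and "\<And>x. l2 (rho x) = eta (l2 x)"
      using dest_Aut[OF cc g] by blast
    have "Gamma_SR (f \<circ> g) = (z1 \<circ> z2, t1 \<circ> t2)"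
      by (rule Gamma_decomp[OF Aut_Mod_comp[OF t1 t2]],
          rule comp_decomp[where f=f and g=g, OF d1 d2 Aut_Mod_D(2)[OF t1]])
    then show "Gamma_SR (f \<otimes>\<^bsub>Aut_A_ext_group op rho phi psi eta alpha\<^esub> g) =
       Gamma_SR f \<otimes>\<^bsub>Aut_SR_group op rho \<times>\<times> Aut_Mod_group phi psi eta\<^esub> Gamma_SR g"
      using Gamma_decomp[OF t1 d1] Gamma_decomp[OF t2 d2]
      by (simp add: DirProd_def Aut_SR_group_def Aut_Mod_group_def Aut_A_ext_group_def)
  qed
  show ?thesis
    using Z1_group[OF cc] Aut_A_ext_group[OF cc] g3 hom1 inj ker hom2 image_eq[OF cc]
    by (intro conjI) assumption+
qed

end
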